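(* Every maximal biflag of $M$ (maximal with respect to inclusion among biflags) has length exactly $n-1$.
   Context: Let $M$ be a matroid with no loops and no coloops on the ground set $E=\{0,1,\dots,n\}$, of rank $r+1$; its dual $M^\perp$ has rank $n-r$. A biflat of $M$ is a pair $F|G$ where $F$ is a flat of $M$, $G$ is a flat of $M^\perp$, both are nonempty, they are not both equal to $E$, and $F\cup G=E$. Two biflats $F|G$, $F'|G'$ are compatible if ($F\subseteq F'$ and $G\supseteq G'$) or ($F\supseteq F'$ and $G\subseteq G'$). A biflag is a set of pairwise compatible biflats with $\bigcup_{F|G}(F\cap G)\neq E$; its length is its number of biflats. *)

theory Defs
  imports Main
begin

definition matroid :: "'a set \<Rightarrow> ('a set \<Rightarrow> bool) \<Rightarrow> bool" where
  "matroid E indep \<longleftrightarrow> finite E \<and> indep {} \<and>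
     (\<forall>I. indep I \<longrightarrow> I \<subseteq> E) \<and>
     (\<forall>I J. indep J \<and> I \<subseteq> J \<longrightarrow> indep I) \<and>
     (\<forall>I J. indep I \<and> indep J \<and> card I < card J \<longrightarrow> (\<exists>x\<in>J - I. indep (insert x I)))"

definition mrank :: "('a set \<Rightarrow> bool) \<Rightarrow> 'a set \<Rightarrow> nat" where
  "mrank indep A = Max {card I | I. I \<subseteq> A \<and> indep I}"

definition basis :: "'a set \<Rightarrow> ('a set \<Rightarrow> bool) \<Rightarrow> 'a set \<Rightarrow> bool" where
  "basis E indep B \<longleftrightarrow> indep B \<and> (\<forall>x\<in>E - B. \<not> indep (insert x B))"

definition dual_indep :: "'a set \<Rightarrow> ('a set \<Rightarrow> bool) \<Rightarrow> 'a set \<Rightarrow> bool" where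
  "dual_indep E indep I \<longleftrightarrow> I \<subseteq> E \<and> (\<exists>B. basis E indep B \<and> I \<inter> B = {})"

definition flat :: "'a set \<Rightarrow> ('a set \<Rightarrow> bool) \<Rightarrow> 'a set \<Rightarrow> bool" where
  "flat E indep F \<longleftrightarrow> F \<subseteq> E \<and> (\<forall>x\<in>E - F. mrank indep (insert x F) > mrank indep F)"

definition loop :: "'a set \<Rightarrow> ('a set \<Rightarrow> bool) \<Rightarrow> 'a \<Rightarrow> bool" where
  "loop E indep x \<longleftrightarrow> x \<in> E \<and> \<not> indep {x}"

definition coloop :: "'a set \<Rightarrow> ('a set \<Rightarrow> bool) \<Rightarrow> 'a \<Rightarrow> bool" where
  "coloop E indep x \<longleftrightarrow> x \<in> E \<and> (\<forall>B. basis E indep B \<longrightarrow> x \<in> B)"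

definition biflat :: "'a set \<Rightarrow> ('a set \<Rightarrow> bool) \<Rightarrow> 'a set \<times> 'a set \<Rightarrow> bool" where
  "biflat E indep FG \<longleftrightarrow> (case FG of (F, G) \<Rightarrow>
     flat E indep F \<and> flat E (dual_indep E indep) G \<and> F \<noteq> {} \<and> G \<noteq> {} \<and>
     \<not> (F = E \<and> G = E) \<and> F \<union> G = E)"

definition compatible :: "'a set \<times> 'a set \<Rightarrow> 'a set \<times> 'a set \<Rightarrow> bool" where
  "compatible FG FG' \<longleftrightarrow> (case FG of (F, G) \<Rightarrow> case FG' of (F', G') \<Rightarrow>
     (F \<subseteq> F' \<and> G \<supseteq> G') \<or> (F \<supseteq> F' \<and> G \<subseteq> G'))"

definition biflag :: "'a set \<Rightarrow> ('a set \<Rightarrow> bool) \<Rightarrow> ('a set \<times> 'a set) set \<Rightarrow> bool" where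
  "biflag E indep S \<longleftrightarrow> (\<forall>FG\<in>S. biflat E indep FG) \<and>
     (\<forall>FG\<in>S. \<forall>FG'\<in>S. compatible FG FG') \<and>
     (\<Union>(F, G)\<in>S. F \<inter> G) \<noteq> E"

definition maximal_biflag :: "'a set \<Rightarrow> ('a set \<Rightarrow> bool) \<Rightarrow> ('a set \<times> 'a set) set \<Rightarrow> bool" where
  "maximal_biflag E indep S \<longleftrightarrow> biflag E indep S \<and>
     (\<forall>T. biflag E indep T \<and> S \<subseteq> T \<longrightarrow> T = S)"

end

theory Submission
  imports Defs
begin


locale mat =
  fixes E :: "'a set" and indep :: "'a set \<Rightarrow> bool"
  assumes m: "matroid E indep"
begin

abbreviation r where "r \<equiv> mrank indep"

lemma finE: "finite E" using m unfolding matroid_def by blast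
lemma indep_sub: "indep I \<Longrightarrow> I \<subseteq> E" using m unfolding matroid_def by blast
lemma indep_fin: "indep I \<Longrightarrow> finite I" using indep_sub finE finite_subset by blast
lemma indep_empty: "indep {}" using m unfolding matroid_def by blast
lemma indep_subset: "indep J \<Longrightarrow> I \<subseteq> J \<Longrightarrow> indep I" using m unfolding matroid_def by blast
lemma aug: "indep I \<Longrightarrow> indep J \<Longrightarrow> card I < card J \<Longrightarrow> \<exists>x\<in>J - I. indep (insert x I)"
  using m unfolding matroid_def by blast

lemma Rfin: "finite {card I | I. I \<subseteq> A \<and> indep I}"
proof -
  have "{card I | I. I \<subseteq> A \<and> indep I} \<subseteq> card ` Pow E" using indep_sub by blast
  then show ?thesis using finE finite_subset by blast
qed

lemma Rne: "{card I | I. I \<subseteq> A \<and> indep I} \<noteq> {}" using indep_empty by blast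

lemma rank_ge: "I \<subseteq> A \<Longrightarrow> indep I \<Longrightarrow> card I \<le> r A"
  unfolding mrank_def using Rfin by (intro Max_ge) auto

lemma rank_obtain: "\<exists>I. I \<subseteq> A \<and> indep I \<and> card I = r A"
proof -
  have "r A \<in> {card I | I. I \<subseteq> A \<and> indep I}" unfolding mrank_def using Rfin Rne by (rule Max_in)
  then show ?thesis by auto
qed

lemma rank_mono: "A \<subseteq> B \<Longrightarrow> r A \<le> r B"
proof -
  assume AB: "A \<subseteq> B"
  obtain I where I: "I \<subseteq> A" "indep I" "card I = r A" using rank_obtain by blast
  have "card I \<le> r B" using I AB by (intro rank_ge) auto
  then show ?thesis using I by simp
qed

lemma rank_le_card: "finite A \<Longrightarrow> r A \<le> card A"
proof -
  assume fA: "finite A"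
  obtain I where I: "I \<subseteq> A" "indep I" "card I = r A" using rank_obtain by blast
  have "card I \<le> card A" using I fA by (intro card_mono) auto
  then show ?thesis using I by simp
qed

lemma rank_empty: "r {} = 0"
  using rank_le_card[of "{}"] by simp

lemma rank_insert: "r (insert x A) \<le> r A + 1"
proof -
  obtain I where I: "I \<subseteq> insert x A" "indep I" "card I = r (insert x A)" using rank_obtain by blast
  have "I - {x} \<subseteq> A" "indep (I - {x})" using I indep_subset by auto
  then have "card (I - {x}) \<le> r A" using rank_ge by blast
  moreover have "card I \<le> card (I - {x}) + 1" by (simp add: card_Diff_singleton_if, arith)
  ultimately show ?thesis using I by simp
qed

lemma rank_union_card: "finite B \<Longrightarrow> r (A \<union> B) \<le> r A + card B"
proof (induction B rule: finite_induct)
  case empty then show ?case by simp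
next
  case (insert x F)
  have "r (A \<union> insert x F) = r (insert x (A \<union> F))" by simp
  also have "\<dots> \<le> r (A \<union> F) + 1" by (rule rank_insert)
  finally show ?case using insert by simp
qed

lemma extend: "indep I \<Longrightarrow> I \<subseteq> X \<Longrightarrow> \<exists>J. I \<subseteq> J \<and> J \<subseteq> X \<and> indep J \<and> card J = r X"
proof (induction "r X - card I" arbitrary: I rule: less_induct)
  case less
  have iI: "indep I" and IX: "I \<subseteq> X" using less.prems by auto
  obtain K where K: "K \<subseteq> X" "indep K" "card K = r X" using rank_obtain by blast
  have le: "card I \<le> r X" using rank_ge iI IX by blast
  show ?case
  proof (cases "card I = r X")
    case True then show ?thesis using iI IX by blast
  next
    case False
    then have "card I < card K" using le K by simp
    then obtain x where x: "x \<in> K - I" "indep (insert x I)" using aug[OF iI K(2)] by blast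
    have c: "card (insert x I) = card I + 1" using x indep_fin[OF iI] by simp
    have lt: "r X - card (insert x I) < r X - card I" using c False le by simp
    have sub: "insert x I \<subseteq> X" using x K IX by blast
    obtain J where "insert x I \<subseteq> J \<and> J \<subseteq> X \<and> indep J \<and> card J = r X"
      using less.hyps[OF lt x(2) sub] by blast
    then show ?thesis by blast
  qed
qed

lemma submod: "r (A \<union> B) + r (A \<inter> B) \<le> r A + r B"
proof -
  obtain I where I: "I \<subseteq> A \<inter> B" "indep I" "card I = r (A \<inter> B)" using rank_obtain by blast
  obtain J where J: "I \<subseteq> J" "J \<subseteq> A \<union> B" "indep J" "card J = r (A \<union> B)"
    using extend[OF I(2), of "A \<union> B"] I by blast
  have fJ: "finite J" using indep_fin J by blast
  have a: "card (J \<inter> A) \<le> r A" using rank_ge indep_subset J by (meson inf_le1 inf_le2)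
  have b: "card (J \<inter> B) \<le> r B" using rank_ge indep_subset J by (meson inf_le1 inf_le2)
  have "card (J \<inter> A \<inter> B) \<le> r (A \<inter> B)" using rank_ge indep_subset J
    by (metis Int_assoc inf_le1 inf_le2)
  moreover have "I \<subseteq> J \<inter> A \<inter> B" using I J by blast
  moreover have "card I \<le> card (J \<inter> A \<inter> B)" using fJ \<open>I \<subseteq> J \<inter> A \<inter> B\<close> by (intro card_mono) auto
  ultimately have ci: "card (J \<inter> A \<inter> B) = card I" using I by simp
  have "card ((J \<inter> A) \<union> (J \<inter> B)) + card ((J \<inter> A) \<inter> (J \<inter> B)) = card (J \<inter> A) + card (J \<inter> B)"
    using fJ by (intro card_Un_Int[symmetric]) auto
  moreover have "(J \<inter> A) \<union> (J \<inter> B) = J" using J by blast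
  moreover have "(J \<inter> A) \<inter> (J \<inter> B) = J \<inter> A \<inter> B" by blast
  ultimately show ?thesis using a b ci I J by simp
qed

definition cl where "cl A = {e \<in> E. r (insert e A) = r A}"

lemma cl_rank_aux: "finite D \<Longrightarrow> D \<subseteq> cl A \<Longrightarrow> r (A \<union> D) = r A"
proof (induction D rule: finite_induct)
  case empty then show ?case by simp
next
  case (insert e D)
  have e: "r (insert e A) = r A" using insert unfolding cl_def by blast
  have "r ((A \<union> D) \<union> insert e A) + r ((A \<union> D) \<inter> insert e A) \<le> r (A \<union> D) + r (insert e A)"
    by (rule submod)
  moreover have "r A \<le> r ((A \<union> D) \<inter> insert e A)" by (rule rank_mono) blast
  moreover have "(A \<union> D) \<union> insert e A = A \<union> insert e D" by blast
  ultimately have "r (A \<union> insert e D) \<le> r A" using insert e by simp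
  moreover have "r A \<le> r (A \<union> insert e D)" by (rule rank_mono) blast
  ultimately show ?case by simp
qed

lemma cl_sub: "cl A \<subseteq> E" unfolding cl_def by blast

lemma cl_ext: "A \<subseteq> E \<Longrightarrow> A \<subseteq> cl A" unfolding cl_def by (auto simp: insert_absorb)

lemma cl_rank: "A \<subseteq> E \<Longrightarrow> r (cl A) = r A"
proof -
  assume "A \<subseteq> E"
  then have "A \<union> cl A = cl A" using cl_ext by blast
  moreover have "finite (cl A)" using finE cl_sub finite_subset by blast
  ultimately show ?thesis using cl_rank_aux[of "cl A" A] by simp
qed

lemma cl_flat: "A \<subseteq> E \<Longrightarrow> flat E indep (cl A)"
  unfolding flat_def
proof (intro conjI ballI)
  assume A: "A \<subseteq> E"
  show "cl A \<subseteq> E" by (rule cl_sub)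
  fix x assume x: "x \<in> E - cl A"
  have "r A \<le> r (insert x A)" by (rule rank_mono) blast
  moreover have "r (insert x A) \<noteq> r A" using x unfolding cl_def by blast
  moreover have "r (insert x A) \<le> r (insert x (cl A))" using cl_ext[OF A] by (intro rank_mono) blast
  ultimately show "r (cl A) < r (insert x (cl A))" using cl_rank[OF A] by simp
qed

lemma cl_least: "flat E indep F \<Longrightarrow> A \<subseteq> F \<Longrightarrow> cl A \<subseteq> F"
proof
  fix e assume F: "flat E indep F" and AF: "A \<subseteq> F" and e: "e \<in> cl A"
  show "e \<in> F"
  proof (rule ccontr)
    assume ne: "e \<notin> F"
    then have "r F < r (insert e F)" using F e cl_sub unfolding flat_def by blast
    moreover have "r (F \<union> insert e A) + r (F \<inter> insert e A) \<le> r F + r (insert e A)" by (rule submod)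
    moreover have "F \<union> insert e A = insert e F" using AF by blast
    moreover have "F \<inter> insert e A = A" using AF ne by blast
    moreover have "r (insert e A) = r A" using e unfolding cl_def by blast
    ultimately show False by simp
  qed
qed

lemma flat_sub: "flat E indep F \<Longrightarrow> F \<subseteq> E" unfolding flat_def by blast

lemma flat_less: "flat E indep F \<Longrightarrow> F \<subset> F' \<Longrightarrow> F' \<subseteq> E \<Longrightarrow> r F < r F'"
proof -
  assume F: "flat E indep F" and s: "F \<subset> F'" and F': "F' \<subseteq> E"
  then obtain x where x: "x \<in> F'" "x \<notin> F" by blast
  then have "r F < r (insert x F)" using F F' unfolding flat_def by blast
  also have "\<dots> \<le> r F'" using s x by (intro rank_mono) blast
  finally show ?thesis .
qed

lemma flat_mono: "flat E indep F \<Longrightarrow> F \<subseteq> F' \<Longrightarrow> F' \<subseteq> E \<Longrightarrow> r F \<le> r F'"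
  using rank_mono by blast

lemma rank_pos: "x \<in> A \<Longrightarrow> indep {x} \<Longrightarrow> 1 \<le> r A"
  using rank_ge[of "{x}" A] by simp

lemma flat_E: "flat E indep E" unfolding flat_def by simp

lemma flat_lessE: "flat E indep F \<Longrightarrow> F \<noteq> E \<Longrightarrow> r F < r E"
  using flat_less[of F E] flat_sub by auto

lemma flat_step: "flat E indep F \<Longrightarrow> x \<in> E \<Longrightarrow> x \<notin> F \<Longrightarrow> r F < r (insert x F)"
  unfolding flat_def by blast

lemma lemL:
  assumes F: "flat E indep F" and F': "flat E indep F'" and sub: "F \<subseteq> F'"
    and y: "y \<in> F'" "y \<notin> F" and rk: "r F + 2 \<le> r F'"
  shows "\<exists>F''. flat E indep F'' \<and> F \<subset> F'' \<and> F'' \<subset> F' \<and> y \<notin> F''"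
proof -
  have FE: "F \<subseteq> E" by (rule flat_sub[OF F])
  have F'E: "F' \<subseteq> E" by (rule flat_sub[OF F'])
  have yE: "y \<in> E" using y(1) F'E by (rule subsetD[rotated])
  have ry: "r (insert y F) = r F + 1"
    using flat_step[OF F yE y(2)] rank_insert[of y F] by simp
  define H where "H = cl (insert y F)"
  have yFE: "insert y F \<subseteq> E" using FE yE by simp
  have rH: "r H = r F + 1" unfolding H_def using cl_rank[OF yFE] ry by simp
  have FH: "insert y F \<subseteq> H" unfolding H_def by (rule cl_ext[OF yFE])
  have fH: "flat E indep H" unfolding H_def by (rule cl_flat[OF yFE])
  have "\<not> F' \<subseteq> H"
  proof
    assume "F' \<subseteq> H" then have "r F' \<le> r H" by (rule rank_mono)
    then show False using rH rk by simp
  qed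
  then obtain x where x: "x \<in> F'" "x \<notin> H" by auto
  have xE: "x \<in> E" using x(1) F'E by (rule subsetD[rotated])
  have xF: "x \<notin> F" using x(2) FH by auto
  have rx: "r (insert x F) = r F + 1"
    using flat_step[OF F xE xF] rank_insert[of x F] by simp
  have xFE: "insert x F \<subseteq> E" using FE xE by simp
  define F'' where "F'' = cl (insert x F)"
  have fl: "flat E indep F''" unfolding F''_def by (rule cl_flat[OF xFE])
  have ext: "insert x F \<subseteq> F''" unfolding F''_def by (rule cl_ext[OF xFE])
  have xF': "insert x F \<subseteq> F'" using x(1) sub by simp
  have sub'': "F'' \<subseteq> F'" unfolding F''_def by (rule cl_least[OF F' xF'])
  have rF'': "r F'' = r F + 1" unfolding F''_def using cl_rank[OF xFE] rx by simp
  have s1: "F \<subset> F''" using ext xF by auto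
  have s2: "F'' \<subset> F'" using sub'' rF'' rk by auto
  have s3: "y \<notin> F''"
  proof
    assume yF: "y \<in> F''"
    have h1: "r (insert y (insert x F)) = r (insert x F)"
      using yF unfolding F''_def cl_def by simp
    have h3: "r H < r (insert x H)" by (rule flat_step[OF fH xE x(2)])
    have sm: "r (insert x (insert y F) \<union> H) + r (insert x (insert y F) \<inter> H) \<le>
                r (insert x (insert y F)) + r H" by (rule submod)
    have e1: "insert x (insert y F) \<union> H = insert x H" using FH by auto
    have h4: "r (insert y F) \<le> r (insert x (insert y F) \<inter> H)" using FH by (intro rank_mono) auto
    have "r (insert x H) \<le> r (insert x (insert y F))" using sm e1 h4 rH ry by simp
    then have "r F + 2 \<le> r (insert y (insert x F))" using h3 rH by (simp add: insert_commute)
    then show False using h1 rx by simp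
  qed
  show ?thesis using fl s1 s2 s3 by blast
qed

definition isbasis where "isbasis B \<longleftrightarrow> basis E indep B"

lemma basis_card: "basis E indep B \<Longrightarrow> card B = r E"
proof -
  assume B: "basis E indep B"
  obtain K where K: "K \<subseteq> E" "indep K" "card K = r E" using rank_obtain by blast
  have iB: "indep B" using B unfolding basis_def by blast
  have le: "card B \<le> r E" using rank_ge indep_sub iB by blast
  show ?thesis
  proof (rule ccontr)
    assume "card B \<noteq> r E"
    then have "card B < card K" using le K by simp
    then obtain x where "x \<in> K - B" "indep (insert x B)" using aug iB K by blast
    then show False using B K unfolding basis_def by blast
  qed
qed

lemma max_basis: "K \<subseteq> E \<Longrightarrow> indep K \<Longrightarrow> card K = r E \<Longrightarrow> basis E indep K"
  unfolding basis_def
proof (intro conjI ballI notI)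
  assume K: "K \<subseteq> E" "indep K" "card K = r E"
  show "indep K" by fact
  fix x assume x: "x \<in> E - K" "indep (insert x K)"
  then have "card (insert x K) \<le> r E" using rank_ge indep_sub by blast
  then show False using x K indep_fin by simp
qed

lemma dual_iff: "dual_indep E indep I \<longleftrightarrow> I \<subseteq> E \<and> r (E - I) = r E"
proof
  assume d: "dual_indep E indep I"
  then obtain B where B: "basis E indep B" "I \<inter> B = {}" "I \<subseteq> E" unfolding dual_indep_def by blast
  have "B \<subseteq> E - I" using B indep_sub unfolding basis_def by blast
  then have "card B \<le> r (E - I)" using rank_ge B unfolding basis_def by blast
  moreover have "r (E - I) \<le> r E" by (rule rank_mono) blast
  ultimately show "I \<subseteq> E \<and> r (E - I) = r E" using basis_card B by simp
next
  assume a: "I \<subseteq> E \<and> r (E - I) = r E"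
  obtain K where K: "K \<subseteq> E - I" "indep K" "card K = r (E - I)" using rank_obtain by blast
  have "basis E indep K" using max_basis K a by auto
  then show "dual_indep E indep I" unfolding dual_indep_def using K a by blast
qed

lemma dual_aug:
  assumes dI: "dual_indep E indep I" and dJ: "dual_indep E indep J" and cIJ: "card I < card J"
  shows "\<exists>x\<in>J - I. dual_indep E indep (insert x I)"
proof (rule ccontr)
  assume nn: "\<not> (\<exists>x\<in>J - I. dual_indep E indep (insert x I))"
  have IE: "I \<subseteq> E" and rI: "r (E - I) = r E" using dI dual_iff by auto
  have JE: "J \<subseteq> E" and rJ: "r (E - J) = r E" using dJ dual_iff by auto
  have fI: "finite I" using IE finE by (rule finite_subset)
  have fJ: "finite J" using JE finE by (rule finite_subset)
  have cx: "r (E - insert x I) < r E" if x: "x \<in> J - I" for x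
  proof -
    have xE: "x \<in> E" using x JE by auto
    have "\<not> dual_indep E indep (insert x I)" using nn x by auto
    then have "r (E - insert x I) \<noteq> r E" using dual_iff IE xE by auto
    moreover have "r (E - insert x I) \<le> r E" by (intro rank_mono) auto
    ultimately show ?thesis by simp
  qed
  have claim: "r ((E - I) - D) + card D \<le> r E" if "finite D" "D \<subseteq> J - I" for D
    using that
  proof (induction D rule: finite_induct)
    case empty then show ?case using rI by simp
  next
    case (insert x D)
    have sm: "r ((E - I - {x}) \<union> (E - I - D)) + r ((E - I - {x}) \<inter> (E - I - D))
          \<le> r (E - I - {x}) + r (E - I - D)" by (rule submod)
    have e1: "(E - I - {x}) \<union> (E - I - D) = E - I" using insert.hyps by auto
    have e2: "(E - I - {x}) \<inter> (E - I - D) = E - I - insert x D" by auto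
    have e3: "E - I - {x} = E - insert x I" by auto
    have lt: "r (E - insert x I) < r E" using cx insert.prems by auto
    have ih: "r (E - I - D) + card D \<le> r E" using insert.IH insert.prems by auto
    show ?case using sm e1 e2 e3 lt ih rI insert.hyps by simp
  qed
  have eq: "(E - I) - (J - I) = E - (I \<union> J)" by auto
  have c1: "r (E - (I \<union> J)) + card (J - I) \<le> r E"
    using claim[of "J - I"] fJ eq by simp
  have "E - J \<subseteq> (E - (I \<union> J)) \<union> (I - J)" by auto
  then have "r (E - J) \<le> r ((E - (I \<union> J)) \<union> (I - J))" by (rule rank_mono)
  also have "\<dots> \<le> r (E - (I \<union> J)) + card (I - J)" using fI by (intro rank_union_card) simp
  finally have c2: "r E \<le> r (E - (I \<union> J)) + card (I - J)" using rJ by simp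
  have "card I = card (I \<inter> J) + card (I - J)" using fI by (rule card_Int_Diff)
  moreover have "card J = card (J \<inter> I) + card (J - I)" using fJ by (rule card_Int_Diff)
  ultimately have "card (I - J) < card (J - I)" using cIJ by (simp add: Int_commute)
  then show False using c1 c2 by simp
qed

lemma dual_matroid: "matroid E (dual_indep E indep)"
proof -
  have a0: "dual_indep E indep {}" using dual_iff by simp
  have a1: "\<forall>I. dual_indep E indep I \<longrightarrow> I \<subseteq> E" using dual_iff by auto
  have a2: "\<forall>I J. dual_indep E indep J \<and> I \<subseteq> J \<longrightarrow> dual_indep E indep I"
  proof (intro allI impI)
    fix I J assume a: "dual_indep E indep J \<and> I \<subseteq> J"
    then have "r (E - J) \<le> r (E - I)" by (intro rank_mono) auto
    moreover have "r (E - I) \<le> r E" by (intro rank_mono) auto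
    ultimately show "dual_indep E indep I" using a dual_iff by auto
  qed
  have a3: "\<forall>I J. dual_indep E indep I \<and> dual_indep E indep J \<and> card I < card J \<longrightarrow>
      (\<exists>x\<in>J - I. dual_indep E indep (insert x I))"
    using dual_aug by blast
  show ?thesis unfolding matroid_def using finE a0 a1 a2 a3 by blast
qed

lemma dual_rank_E: "mrank (dual_indep E indep) E + r E = card E"
proof -
  interpret D: mat E "dual_indep E indep" using dual_matroid by unfold_locales
  obtain I where I: "I \<subseteq> E" "dual_indep E indep I" "card I = D.r E" using D.rank_obtain by blast
  have "r (E - I) = r E" using I dual_iff by blast
  moreover have "r (E - I) \<le> card (E - I)" using finE by (intro rank_le_card) simp
  moreover have "card (E - I) = card E - card I" using I finE by (simp add: card_Diff_subset finite_subset)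
  moreover have "card I \<le> card E" using I finE card_mono by blast
  ultimately have le: "D.r E + r E \<le> card E" using I by simp
  obtain K where K: "K \<subseteq> E" "indep K" "card K = r E" using rank_obtain by blast
  have "dual_indep E indep (E - K)"
  proof -
    have "E - (E - K) = K" using K by blast
    moreover have "r K = r E" using rank_ge[of K K] K rank_mono[of K E] by simp
    ultimately show ?thesis using dual_iff by simp
  qed
  then have "card (E - K) \<le> D.r E" using D.rank_ge by blast
  moreover have "card (E - K) = card E - card K" using K finE by (simp add: card_Diff_subset finite_subset)
  moreover have "card K \<le> card E" using K finE card_mono by blast
  ultimately show ?thesis using le K by simp
qed

end




lemma fin_argmin: "finite K \<Longrightarrow> K \<noteq> {} \<Longrightarrow> \<exists>p\<in>K. \<forall>q\<in>K. (f p :: int) \<le> f q"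
proof -
  assume fK: "finite K" and ne: "K \<noteq> {}"
  have "Min (f ` K) \<in> f ` K" using fK ne by (intro Min_in) auto
  then obtain p where p: "p \<in> K" "f p = Min (f ` K)" by auto
  have "\<forall>q\<in>K. f p \<le> f q" using p fK by auto
  then show ?thesis using p(1) by blast
qed

lemma fin_argmax: "finite K \<Longrightarrow> K \<noteq> {} \<Longrightarrow> \<exists>p\<in>K. \<forall>q\<in>K. f q \<le> (f p :: int)"
proof -
  assume fK: "finite K" and ne: "K \<noteq> {}"
  have "Max (f ` K) \<in> f ` K" using fK ne by (intro Max_in) auto
  then obtain p where p: "p \<in> K" "f p = Max (f ` K)" by auto
  have "\<forall>q\<in>K. f q \<le> f p" using p fK by auto
  then show ?thesis using p(1) by blast
qed

locale bfl = mat E indep for E :: "'a set" and indep +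
  assumes noloop: "\<And>x. \<not> loop E indep x" and nocoloop: "\<And>x. \<not> coloop E indep x"
begin

sublocale D: mat E "dual_indep E indep" using dual_matroid by unfold_locales

abbreviation "Dflat \<equiv> flat E (dual_indep E indep)"
abbreviation "fl \<equiv> flat E indep"

lemma indep_single: "x \<in> E \<Longrightarrow> indep {x}"
  using noloop[of x] unfolding loop_def by auto

lemma dindep_single: "x \<in> E \<Longrightarrow> dual_indep E indep {x}"
proof -
  assume x: "x \<in> E"
  then obtain B where "basis E indep B" "x \<notin> B" using nocoloop[of x] unfolding coloop_def by auto
  then show ?thesis unfolding dual_indep_def using x by auto
qed

lemma rpos: "A \<noteq> {} \<Longrightarrow> A \<subseteq> E \<Longrightarrow> 1 \<le> r A"
  using rank_pos indep_single by blast

lemma Drpos: "A \<noteq> {} \<Longrightarrow> A \<subseteq> E \<Longrightarrow> 1 \<le> D.r A"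
  using D.rank_pos dindep_single by blast

lemma flat_empty: "fl {}"
  unfolding flat_def
proof (intro conjI ballI)
  show "{} \<subseteq> E" by simp
  fix x assume "x \<in> E - {}"
  then have "1 \<le> r {x}" by (intro rpos) auto
  then show "r {} < r (insert x {})" using rank_empty by simp
qed

lemma Dflat_empty: "Dflat {}"
  unfolding flat_def
proof (intro conjI ballI)
  show "{} \<subseteq> E" by simp
  fix x assume "x \<in> E - {}"
  then have "1 \<le> D.r {x}" by (intro Drpos) auto
  then show "D.r {} < D.r (insert x {})" using D.rank_empty by simp
qed

lemma NN: "D.r E + r E = card E" by (rule dual_rank_E)

definition good :: "'a \<Rightarrow> 'a set \<Rightarrow> 'a set \<Rightarrow> bool" where
  "good y F G \<longleftrightarrow> fl F \<and> Dflat G \<and> F \<noteq> {} \<and> G \<noteq> {} \<and> \<not> (F = E \<and> G = E) \<and> F \<union> G = E \<and> y \<notin> F \<inter> G"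

definition psi :: "'a \<Rightarrow> 'a set \<Rightarrow> 'a set \<Rightarrow> int" where
  "psi y F G = int (r F) + int (D.r E) - int (D.r G) - (if y \<in> G then 0 else 1)"

lemma good_sub: "good y F G \<Longrightarrow> F \<subseteq> E \<and> G \<subseteq> E"
  unfolding good_def using flat_sub D.flat_sub by blast

lemma psi_range:
  assumes g: "good y F G" and yE: "y \<in> E"
  shows "1 \<le> psi y F G \<and> psi y F G \<le> int (card E) - 2"
proof -
  have fF: "fl F" and fG: "Dflat G" and ne: "F \<noteq> {}" "G \<noteq> {}" and un: "F \<union> G = E"
    and yn: "y \<notin> F \<inter> G" using g unfolding good_def by auto
  have FE: "F \<subseteq> E" and GE: "G \<subseteq> E" using g good_sub by auto
  have r1: "1 \<le> r F" using rpos ne FE by blast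
  have r2: "1 \<le> D.r G" using Drpos ne GE by blast
  have r3: "r F \<le> r E" using FE by (rule rank_mono)
  have r4: "D.r G \<le> D.r E" using GE by (rule D.rank_mono)
  show ?thesis
  proof (cases "y \<in> G")
    case True
    then have "F \<noteq> E" using yn yE by auto
    then have "r F < r E" using flat_lessE fF by blast
    then show ?thesis using True r1 r2 r3 r4 NN unfolding psi_def by simp
  next
    case False
    then have "G \<noteq> E" using yE by auto
    then have "D.r G < D.r E" using D.flat_lessE fG by blast
    then show ?thesis using False r1 r2 r3 r4 NN unfolding psi_def by simp
  qed
qed

lemma psi_mono:
  assumes g: "good y F G" and g': "good y F' G'" and yE: "y \<in> E"
    and s1: "F \<subseteq> F'" and s2: "G' \<subseteq> G" and ne: "(F, G) \<noteq> (F', G')"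
  shows "psi y F G < psi y F' G'"
proof -
  have fF: "fl F" and fG: "Dflat G" and yn: "y \<notin> F \<inter> G" using g unfolding good_def by auto
  have fF': "fl F'" and fG': "Dflat G'" and yn': "y \<notin> F' \<inter> G'" and un': "F' \<union> G' = E"
    using g' unfolding good_def by auto
  have FE: "F' \<subseteq> E" and GE: "G \<subseteq> E" using g g' good_sub by auto
  have m1: "r F \<le> r F'" using s1 by (rule rank_mono)
  have m2: "D.r G' \<le> D.r G" using s2 by (rule D.rank_mono)
  have l1: "F \<noteq> F' \<Longrightarrow> r F < r F'" using flat_less[OF fF _ FE] s1 by auto
  have l2: "G \<noteq> G' \<Longrightarrow> D.r G' < D.r G" using D.flat_less[OF fG' _ GE] s2 by auto
  show ?thesis
  proof (cases "y \<in> G")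
    case True
    show ?thesis
    proof (cases "y \<in> G'")
      case True2: True
      show ?thesis using True True2 m1 m2 l1 l2 ne unfolding psi_def by (cases "F = F'") auto
    next
      case False2: False
      have "y \<notin> F" using True yn by auto
      moreover have "y \<in> F'" using False2 un' yE by auto
      ultimately have "F \<noteq> F'" by auto
      moreover have "G \<noteq> G'" using True False2 by auto
      ultimately show ?thesis using True False2 l1 l2 unfolding psi_def by simp
    qed
  next
    case False
    then have "y \<notin> G'" using s2 by auto
    then show ?thesis using False m1 m2 l1 l2 ne unfolding psi_def by (cases "F = F'") auto
  qed
qed


lemma goodI: "fl F \<Longrightarrow> Dflat G \<Longrightarrow> F \<noteq> {} \<Longrightarrow> G \<noteq> {} \<Longrightarrow> \<not> (F = E \<and> G = E) \<Longrightarrow> F \<union> G = E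
   \<Longrightarrow> y \<notin> F \<inter> G \<Longrightarrow> good y F G"
  unfolding good_def by blast

lemma bottom:
  assumes g: "good y F G" and yE: "y \<in> E" and p: "1 < psi y F G"
  shows "\<exists>F1 G1. good y F1 G1 \<and> F1 \<subseteq> F \<and> G \<subseteq> G1 \<and> (F1, G1) \<noteq> (F, G)"
proof -
  have fF: "fl F" and fG: "Dflat G" and ne: "F \<noteq> {}" "G \<noteq> {}" and un: "F \<union> G = E"
    and yn: "y \<notin> F \<inter> G" using g unfolding good_def by auto
  have FE: "F \<subseteq> E" and GE: "G \<subseteq> E" using g good_sub by auto
  have r1: "1 \<le> r F" using rpos ne FE by blast
  have r4: "D.r G \<le> D.r E" using GE by (rule D.rank_mono)
  have EE: "E \<noteq> {}" using yE by auto
  show ?thesis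
  proof (cases "y \<in> G")
    case True
    then have yF: "y \<notin> F" using yn by auto
    show ?thesis
    proof (cases "G = E")
      case False
      have "good y F E" using fF D.flat_E ne EE yF FE yE by (intro goodI) auto
      then show ?thesis using False GE by auto
    next
      case GEq: True
      then have "2 \<le> r F" using p True unfolding psi_def by simp
      obtain y' where y': "y' \<in> F" using ne by auto
      obtain F'' where F'': "fl F''" "{} \<subset> F''" "F'' \<subset> F" "y' \<notin> F''"
        using lemL[OF flat_empty fF _ y'] \<open>2 \<le> r F\<close> rank_empty by auto
      have "good y F'' E" using F'' D.flat_E EE yF FE by (intro goodI) auto
      then show ?thesis using F'' GEq by auto
    qed
  next
    case False
    then have yF: "y \<in> F" using un yE by auto
    show ?thesis
    proof (cases "2 \<le> r F")
      case True
      obtain F'' where F'': "fl F''" "{} \<subset> F''" "F'' \<subset> F" "y \<notin> F''"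
        using lemL[OF flat_empty fF _ yF] True rank_empty by auto
      have "good y F'' E" using F'' D.flat_E EE FE by (intro goodI) auto
      then show ?thesis using F'' GE by auto
    next
      case False2: False
      then have "D.r G + 2 \<le> D.r E" using p r1 False unfolding psi_def by simp
      then obtain G'' where G'': "Dflat G''" "G \<subset> G''" "G'' \<subset> E" "y \<notin> G''"
        using D.lemL[OF fG D.flat_E GE yE False] by auto
      have "good y F G''" using G'' fF ne un by (intro goodI) auto
      then show ?thesis using G'' by auto
    qed
  qed
qed

lemma top:
  assumes g: "good y F G" and yE: "y \<in> E" and p: "psi y F G < int (card E) - 2"
  shows "\<exists>F1 G1. good y F1 G1 \<and> F \<subseteq> F1 \<and> G1 \<subseteq> G \<and> (F1, G1) \<noteq> (F, G)"
proof -
  have fF: "fl F" and fG: "Dflat G" and ne: "F \<noteq> {}" "G \<noteq> {}" and un: "F \<union> G = E"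
    and yn: "y \<notin> F \<inter> G" using g unfolding good_def by auto
  have FE: "F \<subseteq> E" and GE: "G \<subseteq> E" using g good_sub by auto
  have r2: "1 \<le> D.r G" using Drpos ne GE by blast
  have r3: "r F \<le> r E" using FE by (rule rank_mono)
  have EE: "E \<noteq> {}" using yE by auto
  show ?thesis
  proof (cases "y \<in> G")
    case False
    then have yF: "y \<in> F" using un yE by auto
    show ?thesis
    proof (cases "F = E")
      case False2: False
      have "good y E G" using flat_E fG ne EE False GE yE by (intro goodI) auto
      then show ?thesis using False2 FE by auto
    next
      case FEq: True
      then have "2 \<le> D.r G" using p False NN unfolding psi_def by simp
      obtain y' where y': "y' \<in> G" using ne by auto
      obtain G'' where G'': "Dflat G''" "{} \<subset> G''" "G'' \<subset> G" "y' \<notin> G''"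
        using D.lemL[OF Dflat_empty fG _ y'] \<open>2 \<le> D.r G\<close> D.rank_empty by auto
      have "good y E G''" using G'' flat_E EE False GE by (intro goodI) auto
      then show ?thesis using G'' FEq by auto
    qed
  next
    case True
    then have yF: "y \<notin> F" using yn by auto
    show ?thesis
    proof (cases "2 \<le> D.r G")
      case True2: True
      obtain G'' where G'': "Dflat G''" "{} \<subset> G''" "G'' \<subset> G" "y \<notin> G''"
        using D.lemL[OF Dflat_empty fG _ True] True2 D.rank_empty by auto
      have "good y E G''" using G'' flat_E EE GE by (intro goodI) auto
      then show ?thesis using G'' yF yE FE by (intro exI[of _ E] exI[of _ G'']) auto
    next
      case False2: False
      then have "r F + 2 \<le> r E" using p r2 True NN unfolding psi_def by simp
      then obtain F'' where F'': "fl F''" "F \<subset> F''" "F'' \<subset> E" "y \<notin> F''"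
        using lemL[OF fF flat_E FE yE yF] by auto
      have "good y F'' G" using F'' fG ne un by (intro goodI) auto
      then show ?thesis using F'' by auto
    qed
  qed
qed


lemma mid:
  assumes g: "good y F G" and g': "good y F' G'" and yE: "y \<in> E"
    and s1: "F \<subseteq> F'" and s2: "G' \<subseteq> G" and p: "psi y F G + 2 \<le> psi y F' G'"
  shows "\<exists>F1 G1. good y F1 G1 \<and> F \<subseteq> F1 \<and> G1 \<subseteq> G \<and> F1 \<subseteq> F' \<and> G' \<subseteq> G1
     \<and> (F1, G1) \<noteq> (F, G) \<and> (F1, G1) \<noteq> (F', G')"
proof -
  have fF: "fl F" and fG: "Dflat G" and ne: "F \<noteq> {}" "G \<noteq> {}" and un: "F \<union> G = E"
    and yn: "y \<notin> F \<inter> G" using g unfolding good_def by auto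
  have fF': "fl F'" and fG': "Dflat G'" and ne': "F' \<noteq> {}" "G' \<noteq> {}" and un': "F' \<union> G' = E"
    and yn': "y \<notin> F' \<inter> G'" using g' unfolding good_def by auto
  have FE: "F \<subseteq> E" and GE: "G \<subseteq> E" using g good_sub by auto
  have FE': "F' \<subseteq> E" and GE': "G' \<subseteq> E" using g' good_sub by auto
  have m1: "r F \<le> r F'" using s1 by (rule rank_mono)
  have m2: "D.r G' \<le> D.r G" using s2 by (rule D.rank_mono)
  show ?thesis
  proof (cases "F \<noteq> F' \<and> G \<noteq> G' \<and> \<not> (y \<in> G \<and> y \<notin> G')")
    case True
    have "good y F' G"
    proof (rule goodI)
      show "\<not> (F' = E \<and> G = E)" using True yn' yE by auto
      show "y \<notin> F' \<inter> G" using True yn' by auto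
    qed (use fF' fG ne' ne un s1 FE' in auto)
    then show ?thesis using True s1 s2 by auto
  next
    case False
    show ?thesis
    proof (cases "r F + 2 \<le> r F'")
      case True
      have "F \<noteq> F'" using True by auto
      then obtain z where z: "z \<in> F' - F" using s1 by auto
      define y0 where "y0 = (if y \<in> F' - F then y else z)"
      have y0: "y0 \<in> F'" "y0 \<notin> F" using z unfolding y0_def by auto
      obtain F'' where F'': "fl F''" "F \<subset> F''" "F'' \<subset> F'" "y0 \<notin> F''"
        using lemL[OF fF fF' s1 y0 True] by auto
      have "good y F'' G"
      proof (rule goodI)
        show "\<not> (F'' = E \<and> G = E)" using F'' FE' by auto
        show "y \<notin> F'' \<inter> G"
        proof
          assume a: "y \<in> F'' \<inter> G"
          show False
          proof (cases "y \<in> F' - F")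
            case True then show False using a F'' unfolding y0_def by auto
          next
            case False then show False using a F'' yn by auto
          qed
        qed
      qed (use F'' ne un fG FE' in auto)
      then show ?thesis using F'' s2 by auto
    next
      case False2: False
      have "D.r G' + 2 \<le> D.r G"
      proof (cases "y \<in> G \<and> y \<notin> G'")
        case True
        then show ?thesis using p False2 unfolding psi_def by simp
      next
        case nj: False
        then have o: "F = F' \<or> G = G'" using False by auto
        have "G \<noteq> G'"
        proof
          assume "G = G'"
          then show False using p False2 nj unfolding psi_def by auto
        qed
        then have "F = F'" using o by auto
        then show ?thesis using p nj s2 unfolding psi_def by (cases "y \<in> G"; cases "y \<in> G'") auto
      qed
      then have "G \<noteq> G'" by auto
      then obtain z where z: "z \<in> G - G'" using s2 by auto
      define y0 where "y0 = (if y \<in> G - G' then y else z)"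
      have y0: "y0 \<in> G" "y0 \<notin> G'" using z unfolding y0_def by auto
      obtain G'' where G'': "Dflat G''" "G' \<subset> G''" "G'' \<subset> G" "y0 \<notin> G''"
        using D.lemL[OF fG' fG s2 y0 \<open>D.r G' + 2 \<le> D.r G\<close>] by auto
      have "good y F' G''"
      proof (rule goodI)
        show "\<not> (F' = E \<and> G'' = E)" using G'' GE by auto
        show "y \<notin> F' \<inter> G''"
        proof
          assume a: "y \<in> F' \<inter> G''"
          show False
          proof (cases "y \<in> G - G'")
            case True then show False using a G'' unfolding y0_def by auto
          next
            case False then show False using a G'' yn' by auto
          qed
        qed
      qed (use G'' ne' un' fF' GE in auto)
      then show ?thesis using G'' s1 by auto
    qed
  qed
qed


lemma compat_iff: "compatible (F, G) (F', G') \<longleftrightarrow> (F \<subseteq> F' \<and> G' \<subseteq> G) \<or> (F' \<subseteq> F \<and> G \<subseteq> G')"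
  unfolding compatible_def by auto

lemma good_biflat: "good y F G \<longleftrightarrow> biflat E indep (F, G) \<and> y \<notin> F \<inter> G"
  unfolding good_def biflat_def by auto

lemma main_card:
  assumes mx: "maximal_biflag E indep S"
  shows "card S = card E - 2"
proof -
  have bS: "biflag E indep S" using mx unfolding maximal_biflag_def by auto
  have mxT: "\<And>T. biflag E indep T \<Longrightarrow> S \<subseteq> T \<Longrightarrow> T = S" using mx unfolding maximal_biflag_def by auto
  have bf: "\<And>p. p \<in> S \<Longrightarrow> biflat E indep p" using bS unfolding biflag_def by auto
  have cp: "\<And>p q. p \<in> S \<Longrightarrow> q \<in> S \<Longrightarrow> compatible p q" using bS unfolding biflag_def by auto
  have gap: "(\<Union>(F, G)\<in>S. F \<inter> G) \<noteq> E" using bS unfolding biflag_def by auto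
  have subE: "\<And>F G. (F, G) \<in> S \<Longrightarrow> F \<subseteq> E \<and> G \<subseteq> E"
    using bf unfolding biflat_def by (auto dest: flat_sub D.flat_sub)
  have "(\<Union>(F, G)\<in>S. F \<inter> G) \<subseteq> E" using subE by auto
  then obtain y where yE: "y \<in> E" and yg: "y \<notin> (\<Union>(F, G)\<in>S. F \<inter> G)" using gap by auto
  have gd: "\<And>F G. (F, G) \<in> S \<Longrightarrow> good y F G"
    using bf yg unfolding good_biflat by fastforce
  have finS: "finite S"
  proof -
    have "S \<subseteq> Pow E \<times> Pow E" using subE by auto
    then show ?thesis using finE by (meson finite_Pow_iff finite_SigmaI finite_subset)
  qed
  define ps where "ps = (\<lambda>p. psi y (fst p) (snd p))"
  define le :: "'a set \<times> 'a set \<Rightarrow> 'a set \<times> 'a set \<Rightarrow> bool" where "le = (\<lambda>p q. fst p \<subseteq> fst q \<and> snd q \<subseteq> snd p)"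
  have le_trans: "\<And>p q s. le p q \<Longrightarrow> le q s \<Longrightarrow> le p s" unfolding le_def by auto
  have le_anti: "\<And>p q. le p q \<Longrightarrow> le q p \<Longrightarrow> p = q" unfolding le_def by (auto simp: prod_eq_iff)
  have cp_le: "\<And>p q. compatible p q \<longleftrightarrow> le p q \<or> le q p"
    unfolding le_def by (auto simp: compat_iff split: prod.splits)
  have psm: "\<And>p q. good y (fst p) (snd p) \<Longrightarrow> good y (fst q) (snd q) \<Longrightarrow> le p q \<Longrightarrow> p \<noteq> q \<Longrightarrow> ps p < ps q"
    unfolding ps_def le_def using psi_mono yE by (metis prod.collapse)
  have gdS: "\<And>p. p \<in> S \<Longrightarrow> good y (fst p) (snd p)" using gd by (metis prod.collapse)
  have chain: "\<And>p q. p \<in> S \<Longrightarrow> q \<in> S \<Longrightarrow> ps p \<le> ps q \<Longrightarrow> le p q"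
  proof -
    fix p q assume p: "p \<in> S" and q: "q \<in> S" and l: "ps p \<le> ps q"
    have "le p q \<or> le q p" using cp[OF p q] cp_le by auto
    then show "le p q"
    proof
      assume "le q p"
      then show "le p q"
        using psm[OF gdS[OF q] gdS[OF p]] l le_def by (cases "p = q") auto
    qed
  qed
  have inj: "inj_on ps S"
  proof (rule inj_onI)
    fix p q assume "p \<in> S" "q \<in> S" "ps p = ps q"
    then show "p = q" using chain le_anti by (metis order_refl)
  qed
  have rng: "ps ` S \<subseteq> {1 .. int (card E) - 2}"
    using psi_range gdS yE unfolding ps_def by fastforce
  have surj: "{1 .. int (card E) - 2} \<subseteq> ps ` S"
  proof
    fix v assume v: "v \<in> {1 .. int (card E) - 2}"
    show "v \<in> ps ` S"
    proof (rule ccontr)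
      assume nv: "v \<notin> ps ` S"
      have v1: "1 \<le> v" and v2: "v \<le> int (card E) - 2" using v by auto
      have ex: "\<exists>X. good y (fst X) (snd X) \<and> X \<notin> S \<and> (\<forall>q\<in>S. le X q \<or> le q X)"
      proof (cases "S = {}")
        case True
        have EE: "E \<noteq> {}" using yE by auto
        have sum3: "3 \<le> D.r E + r E" using NN v1 v2 by simp
        show ?thesis
        proof (cases "2 \<le> r E")
          case True2: True
          obtain F'' where F'': "fl F''" "{} \<subset> F''" "F'' \<subset> E" "y \<notin> F''"
            using lemL[OF flat_empty flat_E _ yE] True2 rank_empty by auto
          have "good y F'' E" using F'' D.flat_E EE by (intro goodI) auto
          then show ?thesis using True by (intro exI[of _ "(F'', E)"]) auto
        next
          case False2: False
          then have "2 \<le> D.r E" using sum3 by simp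
          obtain G'' where G'': "Dflat G''" "{} \<subset> G''" "G'' \<subset> E" "y \<notin> G''"
            using D.lemL[OF Dflat_empty D.flat_E _ yE] \<open>2 \<le> D.r E\<close> D.rank_empty by auto
          have "good y E G''" using G'' flat_E EE by (intro goodI) auto
          then show ?thesis using True by (intro exI[of _ "(E, G'')"]) auto
        qed
      next
        case Sne: False
        define A where "A = {p\<in>S. ps p < v}"
        define Z where "Z = {p\<in>S. v < ps p}"
        have AZ: "\<And>p. p \<in> S \<Longrightarrow> p \<in> A \<or> p \<in> Z"
        proof -
          fix p assume pS: "p \<in> S"
          then have "ps p \<noteq> v" using nv by (metis image_eqI)
          then show "p \<in> A \<or> p \<in> Z" using pS unfolding A_def Z_def by auto
        qed
        have fA: "finite A" and fZ: "finite Z" using finS unfolding A_def Z_def by auto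
        show ?thesis
        proof (cases "A = {}")
          case True
          then have Z: "Z \<noteq> {}" using Sne AZ by auto
          obtain p1 where p1: "p1 \<in> Z" "\<forall>q\<in>Z. ps p1 \<le> ps q" using fin_argmin[OF fZ Z] by blast
          have p1S: "p1 \<in> S" and p1v: "v < ps p1" using p1 unfolding Z_def by auto
          have all: "\<forall>q\<in>S. le p1 q"
          proof
            fix q assume qS: "q \<in> S"
            then have "q \<in> Z" using AZ True by blast
            then have "ps p1 \<le> ps q" using p1(2) by blast
            then show "le p1 q" by (rule chain[OF p1S qS])
          qed
          have "1 < psi y (fst p1) (snd p1)" using p1v v1 unfolding ps_def by simp
          then obtain F1 G1 where X: "good y F1 G1" "F1 \<subseteq> fst p1" "snd p1 \<subseteq> G1" "(F1, G1) \<noteq> (fst p1, snd p1)"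
            using bottom[OF gdS[OF p1S] yE] by blast
          have lX: "le (F1, G1) p1" using X unfolding le_def by auto
          have n1: "(F1, G1) \<noteq> p1" using X by auto
          have nS: "(F1, G1) \<notin> S"
          proof
            assume "(F1, G1) \<in> S"
            then have "le p1 (F1, G1)" using all by blast
            then show False using le_anti[OF lX] n1 by blast
          qed
          have cmp: "\<forall>q\<in>S. le (F1, G1) q" using all lX le_trans by blast
          show ?thesis using X nS cmp by (intro exI[of _ "(F1, G1)"]) auto
        next
          case Ane: False
          show ?thesis
          proof (cases "Z = {}")
            case True
            obtain p1 where p1: "p1 \<in> A" "\<forall>q\<in>A. ps q \<le> ps p1" using fin_argmax[OF fA Ane] by blast
            have p1S: "p1 \<in> S" and p1v: "ps p1 < v" using p1 unfolding A_def by auto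
            have all: "\<forall>q\<in>S. le q p1"
            proof
              fix q assume qS: "q \<in> S"
              then have "q \<in> A" using AZ True by blast
              then have "ps q \<le> ps p1" using p1(2) by blast
              then show "le q p1" by (rule chain[OF qS p1S])
            qed
            have pt: "psi y (fst p1) (snd p1) < int (card E) - 2" using p1v v2 unfolding ps_def by simp
            obtain F1 G1 where X: "good y F1 G1" "fst p1 \<subseteq> F1" "G1 \<subseteq> snd p1" "(F1, G1) \<noteq> (fst p1, snd p1)"
              using top[OF gdS[OF p1S] yE pt] by blast
            have lX: "le p1 (F1, G1)" using X unfolding le_def by auto
            have n1: "(F1, G1) \<noteq> p1" using X by auto
            have nS: "(F1, G1) \<notin> S"
            proof
              assume "(F1, G1) \<in> S"
              then have "le (F1, G1) p1" using all by blast
              then show False using le_anti[OF lX] n1 by blast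
            qed
            have cmp: "\<forall>q\<in>S. le q (F1, G1)" using all lX le_trans by blast
            show ?thesis using X nS cmp by (intro exI[of _ "(F1, G1)"]) auto
          next
            case Zne: False
            obtain p where p: "p \<in> A" "\<forall>q\<in>A. ps q \<le> ps p" using fin_argmax[OF fA Ane] by blast
            obtain q where q: "q \<in> Z" "\<forall>s\<in>Z. ps q \<le> ps s" using fin_argmin[OF fZ Zne] by blast
            have pS: "p \<in> S" and pv: "ps p < v" using p unfolding A_def by auto
            have qS: "q \<in> S" and qv: "v < ps q" using q unfolding Z_def by auto
            have lpq: "le p q" using pv qv by (intro chain[OF pS qS]) simp
            have below: "\<And>s. s \<in> S \<Longrightarrow> ps s < v \<Longrightarrow> le s p"
            proof -
              fix s assume sS: "s \<in> S" and sv: "ps s < v"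
              then have "s \<in> A" unfolding A_def by blast
              then have "ps s \<le> ps p" using p(2) by blast
              then show "le s p" by (rule chain[OF sS pS])
            qed
            have above: "\<And>s. s \<in> S \<Longrightarrow> v < ps s \<Longrightarrow> le q s"
            proof -
              fix s assume sS: "s \<in> S" and sv: "v < ps s"
              then have "s \<in> Z" unfolding Z_def by blast
              then have "ps q \<le> ps s" using q(2) by blast
              then show "le q s" by (rule chain[OF qS sS])
            qed
            have "psi y (fst p) (snd p) + 2 \<le> psi y (fst q) (snd q)" using pv qv unfolding ps_def by simp
            then obtain F1 G1 where X: "good y F1 G1" "fst p \<subseteq> F1" "G1 \<subseteq> snd p" "F1 \<subseteq> fst q" "snd q \<subseteq> G1"
                "(F1, G1) \<noteq> (fst p, snd p)" "(F1, G1) \<noteq> (fst q, snd q)"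
              using mid[OF gdS[OF pS] gdS[OF qS] yE] lpq unfolding le_def by blast
            have l1: "le p (F1, G1)" and l2: "le (F1, G1) q" using X unfolding le_def by auto
            have n1: "(F1, G1) \<noteq> p" and n2: "(F1, G1) \<noteq> q" using X by auto
            have cmp: "\<forall>s\<in>S. le (F1, G1) s \<or> le s (F1, G1)"
            proof
              fix s assume sS: "s \<in> S"
              show "le (F1, G1) s \<or> le s (F1, G1)"
              proof (cases "ps s < v")
                case True then show ?thesis using below[OF sS] l1 le_trans by blast
              next
                case False
                moreover have "ps s \<noteq> v" using nv sS by (metis image_eqI)
                ultimately have "v < ps s" by simp
                then show ?thesis using above[OF sS] l2 le_trans by blast
              qed
            qed
            have nS: "(F1, G1) \<notin> S"
            proof
              assume XS: "(F1, G1) \<in> S"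
              show False
              proof (cases "ps (F1, G1) < v")
                case True then show False using below[OF XS True] l1 le_anti n1 by blast
              next
                case False
                moreover have "ps (F1, G1) \<noteq> v" using nv XS by (metis image_eqI)
                ultimately have "v < ps (F1, G1)" by simp
                then show False using above[OF XS] l2 le_anti n2 by blast
              qed
            qed
            show ?thesis using X nS cmp by (intro exI[of _ "(F1, G1)"]) auto
          qed
        qed
      qed
      then obtain X where X: "good y (fst X) (snd X)" "X \<notin> S" "\<forall>q\<in>S. le X q \<or> le q X" by blast
      have "biflag E indep (insert X S)"
        unfolding biflag_def
      proof (intro conjI ballI)
        fix p assume "p \<in> insert X S"
        then show "biflat E indep p" using bf X good_biflat by (metis insert_iff prod.collapse)
      next
        fix p q assume p: "p \<in> insert X S" and q: "q \<in> insert X S"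
        have cX: "\<forall>q\<in>S. compatible X q \<and> compatible q X" using X(3) cp_le by auto
        have cXX: "compatible X X" using cp_le unfolding le_def by auto
        show "compatible p q"
        proof (cases "p = X")
          case True then show ?thesis using q cX cXX by auto
        next
          case False
          then have pS: "p \<in> S" using p by auto
          show ?thesis
          proof (cases "q = X")
            case True then show ?thesis using pS cX by auto
          next
            case False then show ?thesis using pS q cp by auto
          qed
        qed
      next
        have "y \<notin> (\<Union>(F, G)\<in>insert X S. F \<inter> G)" using yg X good_biflat by (auto split: prod.splits)
        then show "(\<Union>(F, G)\<in>insert X S. F \<inter> G) \<noteq> E" using yE by auto
      qed
      then have "insert X S = S" using mxT by auto
      then show False using X by auto
    qed
  qed
  have "ps ` S = {1 .. int (card E) - 2}" using rng surj by auto
  then have "card S = card {1 .. int (card E) - 2}" using card_image[OF inj] by simp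
  then show ?thesis by simp
qed

end

theorem mainTheorem2:
  fixes n r :: nat and indep :: "nat set \<Rightarrow> bool" and S :: "(nat set \<times> nat set) set"
  assumes "matroid {0..n} indep"
    and "\<forall>x. \<not> loop {0..n} indep x"
    and "\<forall>x. \<not> coloop {0..n} indep x"
    and "mrank indep {0..n} = r + 1"
    and "maximal_biflag {0..n} indep S"
  shows "card S = n - 1"
proof -
  interpret bfl "{0..n}" indep
    using assms(1-3) by unfold_locales auto
  have "card S = card {0..n} - 2" using main_card assms(5) by blast
  then show ?thesis by simp
qed

end
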